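(* Let $k$ be algebraically closed of characteristic zero and $q\in k^\times$ not a root of unity. Suppose $a,b\in SL_n(k((t)))$ and there is $c\in GL_n(k((t)))$ with $b=c\,a\,\sigma_q(c)^{-1}$. Then there exists $c'\in SL_n(k((t)))$ with $b=c'a\sigma_q(c')^{-1}$. In other words, the natural map from $q$-conjugacy classes in $SL_n(k((t)))$ to $q$-conjugacy classes in $GL_n(k((t)))$ is injective.
   Context: $\sigma_q$ is the $k$-automorphism $a(t)\mapsto a(qt)$ of $k((t))$, applied entrywise to matrices. A $q$-conjugacy class in a $\sigma_q$-stable subgroup $G\subseteq GL_n(k((t)))$ is an orbit of $G$ acting on itself by $g\mapsto hg\sigma_q(h)^{-1}$. *)

theory Defs
  imports "HOL-Analysis.Analysis" "HOL-Computational_Algebra.Computational_Algebra"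
begin

definition alg_closed :: "'k::field itself \<Rightarrow> bool" where
  "alg_closed _ \<longleftrightarrow> (\<forall>p :: 'k poly. degree p \<ge> 1 \<longrightarrow> (\<exists>x. poly p x = 0))"

text \<open>sigma_q on k((t)): a(t) maps to a(q t), i.e. the n-th coefficient is multiplied by q^n.\<close>
lift_definition fls_sigma :: "'k::field \<Rightarrow> 'k fls \<Rightarrow> 'k fls"
  is "\<lambda>q f n. q powi n * f n"
  by (auto elim!: eventually_mono)

definition mat_sigma :: "'k::field \<Rightarrow> 'k fls ^'n^'m \<Rightarrow> 'k fls ^'n^'m" where
  "mat_sigma q A = (\<chi> i j. fls_sigma q (A $ i $ j))"

end

theory Submission imports Defs begin
notation fls_nth (infixl \<open>$$\<close> 75)
lemma sig_nth [simp]: "fls_sigma q f $$ n = q powi n * f $$ n"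
  by transfer simp

lemma sig_add: "fls_sigma q (f + g) = fls_sigma q f + fls_sigma q g"
  by (simp add: fls_eq_iff algebra_simps)

lemma sig_zero [simp]: "fls_sigma q 0 = 0"
  by (simp add: fls_eq_iff)

lemma sig_one [simp]: "fls_sigma q 1 = 1"
  by (simp add: fls_eq_iff)

lemma sig_uminus: "fls_sigma q (- f) = - fls_sigma q f"
  by (simp add: fls_eq_iff)

lemma sig_const [simp]: "fls_sigma q (fls_const x) = fls_const x"
  by (simp add: fls_eq_iff)

lemma sig_eq0: "(q::'k::field) \<noteq> 0 \<Longrightarrow> fls_sigma q f = 0 \<longleftrightarrow> f = 0"
  by (auto simp: fls_eq_iff)

lemma sig_subdeg: "(q::'k::field) \<noteq> 0 \<Longrightarrow> fls_subdegree (fls_sigma q f) = fls_subdegree f"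
proof (cases "f = 0")
  case False
  assume q: "q \<noteq> 0"
  show ?thesis
    apply (rule fls_subdegree_eqI)
    using False q nth_fls_subdegree_nonzero[of f] by auto
qed simp

lemma sig_mult:
  assumes q: "(q::'k::field) \<noteq> 0"
  shows "fls_sigma q (f * g) = fls_sigma q f * fls_sigma q g"
proof (rule fls_eqI)
  fix n
  have "fls_sigma q (f * g) $$ n = q powi n * (\<Sum>i=fls_subdegree f..n - fls_subdegree g. f $$ i * g $$ (n - i))"
    by (simp add: fls_times_nth(2))
  also have "\<dots> = (\<Sum>i=fls_subdegree f..n - fls_subdegree g. (q powi i * f $$ i) * (q powi (n-i) * g $$ (n - i)))"
    unfolding sum_distrib_left
    apply (rule sum.cong, simp)
    using q by (simp add: power_int_add[symmetric] algebra_simps)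
  also have "\<dots> = (fls_sigma q f * fls_sigma q g) $$ n"
    by (simp add: fls_times_nth(2) sig_subdeg[OF q])
  finally show "fls_sigma q (f * g) $$ n = (fls_sigma q f * fls_sigma q g) $$ n" .
qed

lemma sig_sum: "fls_sigma q (sum f A) = sum (\<lambda>x. fls_sigma q (f x)) A"
  by (induction A rule: infinite_finite_induct) (auto simp: sig_add)

lemma sig_prod: "(q::'k::field) \<noteq> 0 \<Longrightarrow> fls_sigma q (prod f A) = prod (\<lambda>x. fls_sigma q (f x)) A"
  by (induction A rule: infinite_finite_induct) (auto simp: sig_mult)

lemma sig_of_int [simp]: "fls_sigma q (of_int z) = of_int z"
  by (simp add: fls_of_int)

lemma mat_sigma_mult:
  assumes q: "(q::'k::field) \<noteq> 0"
  shows "mat_sigma q ((A::'k fls^'n::finite^'m) ** (B::'k fls^'p::finite^'n)) = mat_sigma q A ** mat_sigma q B"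
  by (simp add: mat_sigma_def matrix_matrix_mult_def vec_eq_iff sig_sum sig_mult[OF q])

lemma mat_sigma_mat [simp]: "mat_sigma q (mat (fls_const x)) = mat (fls_const x)"
  by (simp add: mat_sigma_def mat_def vec_eq_iff)

lemma det_sigma:
  assumes q: "(q::'k::field) \<noteq> 0"
  shows "det (mat_sigma q (A::'k fls^'n::finite^'n)) = fls_sigma q (det A)"
  by (simp add: det_def mat_sigma_def sig_sum sig_mult[OF q] sig_prod[OF q])

lemma ifm1: "(if P then k else 0) * (x::'a::comm_ring_1) = (if P then k * x else 0)" by simp
lemma ifm2: "(x::'a::comm_ring_1) * (if P then k else 0) = (if P then x * k else 0)" by simp

lemma mat_left: "mat k ** (A::'a::comm_ring_1^'p::finite^'n::finite) = (\<chi> i j. k * A$i$j)"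
  by (simp add: matrix_matrix_mult_def mat_def vec_eq_iff ifm1)

lemma mat_right: "(A::'a::comm_ring_1^'n::finite^'p::finite) ** mat k = (\<chi> i j. k * A$i$j)"
  by (simp add: matrix_matrix_mult_def mat_def vec_eq_iff ifm2 mult.commute)

lemma mat_comm: "mat k ** (A::'a::comm_ring_1^'n::finite^'n) = A ** mat k"
  by (simp add: mat_left mat_right)

lemma mat_mat: "mat k ** (mat l::'a::comm_ring_1^'n::finite^'n) = mat (k * l)"
  by (simp add: mat_left) (simp add: mat_def vec_eq_iff)

lemma det_mat: "det (mat k::'a::comm_ring_1^'n::finite^'n) = k ^ CARD('n)"
  by (subst det_diagonal) (simp_all add: mat_def)

lemma inv_props:
  assumes "invertible (A::'a::semiring_1^'n::finite^'n)"
  shows "A ** matrix_inv A = mat 1 \<and> matrix_inv A ** A = mat 1"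
  using assms unfolding invertible_def matrix_inv_def by (rule someI_ex)

lemma inv_unique:
  fixes A :: "'a::field^'n::finite^'n"
  assumes "A ** X = mat 1"
  shows "matrix_inv A = X"
proof -
  have "det A * det X = 1" using det_mul[of A X] assms by simp
  hence "det A \<noteq> 0" by auto
  hence i: "invertible A" by (simp add: invertible_det_nz)
  have "X = (matrix_inv A ** A) ** X" using inv_props[OF i] by (simp add: matrix_mul_lid)
  also have "\<dots> = matrix_inv A" using assms by (simp add: matrix_mul_assoc[symmetric] matrix_mul_rid)
  finally show ?thesis by simp
qed

theorem mainTheorem3:
  fixes q :: "'k::field_char_0"
    and a b c :: "'k fls ^'n::finite^'n"
  assumes "alg_closed TYPE('k)"
    and "q \<noteq> 0"
    and "\<forall>m::nat. m > 0 \<longrightarrow> q ^ m \<noteq> 1"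
    and "det a = 1" and "det b = 1"
    and "invertible c"
    and "b = c ** a ** matrix_inv (mat_sigma q c)"
  shows "\<exists>c'. det c' = 1 \<and> b = c' ** a ** matrix_inv (mat_sigma q c')"
proof -
  note q = assms(2)
  define d where "d = det c"
  have sc: "det (mat_sigma q c) = fls_sigma q d" by (simp add: det_sigma[OF q] d_def)
  have dnz: "d \<noteq> 0" using assms(6) by (simp add: d_def invertible_det_nz)
  have sdnz: "fls_sigma q d \<noteq> 0" using dnz sig_eq0[OF q] by simp
  have isc: "invertible (mat_sigma q c)" using sc sdnz by (simp add: invertible_det_nz)
  have "det (mat_sigma q c) * det (matrix_inv (mat_sigma q c)) = 1"
    using det_mul[of "mat_sigma q c" "matrix_inv (mat_sigma q c)"] inv_props[OF isc] by simp
  hence h1: "fls_sigma q d * det (matrix_inv (mat_sigma q c)) = 1" by (simp add: sc)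
  have h2: "d * det (matrix_inv (mat_sigma q c)) = 1"
    using assms(4,5,7) by (simp add: det_mul d_def)
  have sd: "fls_sigma q d = d"
  proof -
    have "fls_sigma q d = fls_sigma q d * (d * det (matrix_inv (mat_sigma q c)))" using h2 by simp
    also have "\<dots> = d * (fls_sigma q d * det (matrix_inv (mat_sigma q c)))" by (simp add: algebra_simps)
    also have "\<dots> = d" using h1 by simp
    finally show ?thesis .
  qed
  have dnth: "d $$ n = 0" if "n \<noteq> 0" for n
  proof -
    have "q powi n \<noteq> 1"
    proof (cases "n > 0")
      case True
      then show ?thesis using assms(3)[rule_format, of "nat n"] by (simp add: power_int_def)
    next
      case False
      hence "nat (-n) > 0" using that by simp
      then show ?thesis using assms(3)[rule_format, of "nat (-n)"] False q
        by (auto simp: power_int_def field_simps)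
    qed
    moreover have "q powi n * d $$ n = d $$ n" using sd by (metis sig_nth)
    ultimately show ?thesis by (metis mult_cancel_right2)
  qed
  define e where "e = d $$ 0"
  have de: "d = fls_const e" by (auto simp: fls_eq_iff e_def dnth)
  have enz: "e \<noteq> 0" using dnz de by auto
  define N where "N = CARD('n)"
  have N1: "N \<ge> 1" by (simp add: N_def Suc_le_eq)
  have "degree (monom e N - 1) = N" using N1 enz using degree_add_eq_left[of "- 1" "monom e N"] by (simp add: degree_monom_eq)
  then obtain x where "poly (monom e N - 1) x = 0" using assms(1) N1 unfolding alg_closed_def by metis
  hence ex: "e * x ^ N = 1" by (simp add: poly_monom)
  hence xnz: "x \<noteq> 0" using N1 by (cases "x = 0") (auto simp: power_0_left)
  define X where "X = (mat (fls_const x) :: 'k fls ^'n^'n)"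
  define Y where "Y = (mat (fls_const (inverse x)) :: 'k fls ^'n^'n)"
  have XY: "X ** Y = mat 1" using xnz by (simp add: X_def Y_def mat_mat fls_const_mult_const[symmetric])
  define c' where "c' = X ** c"
  have detc': "det c' = 1"
    using ex by (simp add: c'_def det_mul X_def det_mat N_def[symmetric] d_def[symmetric] de
        fls_const_power[symmetric] fls_const_mult_const mult.commute)
  have sc': "mat_sigma q c' = X ** mat_sigma q c" by (simp add: c'_def mat_sigma_mult[OF q] X_def)
  have ic': "matrix_inv (mat_sigma q c') = matrix_inv (mat_sigma q c) ** Y"
  proof (rule inv_unique)
    have "mat_sigma q c' ** (matrix_inv (mat_sigma q c) ** Y) = X ** (mat_sigma q c ** matrix_inv (mat_sigma q c)) ** Y"
      by (simp add: sc' matrix_mul_assoc)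
    also have "\<dots> = mat 1" using inv_props[OF isc] XY by (simp add: matrix_mul_rid)
    finally show "mat_sigma q c' ** (matrix_inv (mat_sigma q c) ** Y) = mat 1" .
  qed
  have "c' ** a ** matrix_inv (mat_sigma q c') = X ** (c ** a ** matrix_inv (mat_sigma q c)) ** Y"
    unfolding ic' by (simp add: c'_def matrix_mul_assoc)
  also have "\<dots> = X ** b ** Y" using assms(7) by simp
  also have "\<dots> = b ** X ** Y" unfolding X_def by (simp only: mat_comm)
  also have "\<dots> = b ** (X ** Y)" by (simp add: matrix_mul_assoc)
  also have "\<dots> = b" by (simp add: XY matrix_mul_rid)
  finally show ?thesis using detc' by metis
qed

end
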